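(* Let $K$ be a field, $A=\{\alpha_1,\dots,\alpha_m\}\subset K$, $B=\{\beta_1,\dots,\beta_n\}\subset K$ finite sets with $|A|=m$, $|B|=n$, $f=\prod_{i}(x-\alpha_i)$, $g=\prod_j(x-\beta_j)$. Let $0\le p\le m$, $0\le q\le n$, set $d:=p+q$ and assume $d\le\min\{m-1,n-1\}$. Then $$\operatorname{Syl}_{p,q}(A,B)=(-1)^{p(m-d)}\binom{d}{p}\operatorname{Sres}_d(f,g).$$
   Context: For finite sets $Y,Z$, $\mathcal{R}(Y,Z):=\prod_{y\in Y,z\in Z}(y-z)$ (equal to $1$ if $Y$ or $Z$ is empty), and $\mathcal{R}(x,Z):=\mathcal{R}(\{x\},Z)$. For $0\le p\le m$, $0\le q\le n$, $$\operatorname{Syl}_{p,q}(A,B)(x):=\sum_{\substack{A'\subset A,\ B'\subset B\\ |A'|=p,\ |B'|=q}}\mathcal{R}(A',B')\,\mathcal{R}(A\setminus A',B\setminus B')\,\frac{\mathcal{R}(x,A')\,\mathcal{R}(x,B')}{\mathcal{R}(A',A\setminus A')\,\mathcal{R}(B',B\setminus B')}.$$ Write $f=\sum_{i=0}^m f_ix^i$, $g=\sum_{i=0}^ng_ix^i$ with $f_i=g_i=0$ outside the natural ranges. For $d\le\min\{m,n\}$ if $m\ne n$, or $d<m=n$, the subresultant $\operatorname{Sres}_d(f,g)(x)$ is the determinant of the $(m+n-2d)\times(m+n-2d)$ matrix with rows $x^jf(x)$ for $j=n-d-1,\dots,0$ followed by rows $x^jg(x)$ for $j=m-d-1,\dots,0$,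 where the row of a polynomial $h$ has as first $m+n-2d-1$ entries the coefficients of $x^{m+n-d-1},\dots,x^{d+1}$ in $h$, and as last entry $h(x)$. *)

theory Defs
  imports "HOL-Computational_Algebra.Polynomial" "Jordan_Normal_Form.Determinant"
begin

definition Rset :: "'a::comm_ring_1 set \<Rightarrow> 'a set \<Rightarrow> 'a" where
  "Rset Y Z = (\<Prod>y\<in>Y. \<Prod>z\<in>Z. y - z)"

definition Rx :: "'a::comm_ring_1 set \<Rightarrow> 'a poly" where
  "Rx Z = (\<Prod>z\<in>Z. [:- z, 1:])"

definition Syl :: "nat \<Rightarrow> nat \<Rightarrow> 'a::field set \<Rightarrow> 'a set \<Rightarrow> 'a poly" where
  "Syl p q A B =
     (\<Sum>A'\<in>{A'. A' \<subseteq> A \<and> card A' = p}. \<Sum>B'\<in>{B'. B' \<subseteq> B \<and> card B' = q}.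
        smult (Rset A' B' * Rset (A - A') (B - B') / (Rset A' (A - A') * Rset B' (B - B')))
              (Rx A' * Rx B'))"

text \<open>The (m+n-2d) x (m+n-2d) matrix of the d-th subresultant (m = degree f, n = degree g):
  rows x^j f(x) for j = n-d-1,...,0, then x^j g(x) for j = m-d-1,...,0; the row of h has
  as first m+n-2d-1 entries the coefficients of x^(m+n-d-1),...,x^(d+1) of h and as last entry h(x).\<close>
definition Sres_mat :: "nat \<Rightarrow> 'a::comm_ring_1 poly \<Rightarrow> 'a poly \<Rightarrow> 'a poly mat" where
  "Sres_mat d f g = (let m = degree f; n = degree g; N = m + n - 2 * d;
      h = (\<lambda>r. if r < n - d then monom 1 (n - d - 1 - r) * f
               else monom 1 (m - d - 1 - (r - (n - d))) * g)
    in mat N N (\<lambda>(r, c). if c < N - 1 then [: coeff (h r) (m + n - d - 1 - c) :] else h r))"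

definition Sres :: "nat \<Rightarrow> 'a::comm_ring_1 poly \<Rightarrow> 'a poly \<Rightarrow> 'a poly" where
  "Sres d f g = det (Sres_mat d f g)"

end

theory Submission
  imports Defs Subresultants.Subresultant
begin

lemma Rset_empty_left[simp]: "Rset {} Z = 1" by (simp add: Rset_def)
lemma Rset_empty_right[simp]: "Rset Y {} = 1" by (simp add: Rset_def)

lemma Rset_insert_left: "finite Y \<Longrightarrow> y \<notin> Y \<Longrightarrow>
  Rset (insert y Y) Z = (\<Prod>z\<in>Z. y - z) * Rset Y Z"
  by (simp add: Rset_def)

lemma Rset_insert_right: "finite Z \<Longrightarrow> z \<notin> Z \<Longrightarrow>
  Rset Y (insert z Z) = (\<Prod>y\<in>Y. y - z) * Rset Y Z"
  by (simp add: Rset_def prod.distrib)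

lemma Rset_union_left: "finite Y1 \<Longrightarrow> finite Y2 \<Longrightarrow> Y1 \<inter> Y2 = {} \<Longrightarrow>
  Rset (Y1 \<union> Y2) Z = Rset Y1 Z * Rset Y2 Z"
  by (simp add: Rset_def prod.union_disjoint)

lemma Rset_union_right: "finite Z1 \<Longrightarrow> finite Z2 \<Longrightarrow> Z1 \<inter> Z2 = {} \<Longrightarrow>
  Rset Y (Z1 \<union> Z2) = Rset Y Z1 * Rset Y Z2"
  by (simp add: Rset_def prod.union_disjoint prod.distrib)

lemma prod_neg_swap: "(\<Prod>z\<in>Z. (y::'a::comm_ring_1) - z) = (-1)^card Z * (\<Prod>z\<in>Z. z - y)"
proof -
  have "(\<Prod>z\<in>Z. y - z) = (\<Prod>z\<in>Z. (-1) * (z - y))" by simp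
  also have "\<dots> = (\<Prod>z\<in>Z. -1) * (\<Prod>z\<in>Z. z - y)" by (rule prod.distrib)
  finally show ?thesis by simp
qed

lemma Rset_swap: "Rset Z Y = (-1)^(card Y * card Z) * (Rset Y Z :: 'a::comm_ring_1)"
proof -
  have "Rset Z Y = (\<Prod>z\<in>Z. \<Prod>y\<in>Y. z - y)" by (simp add: Rset_def)
  also have "\<dots> = (\<Prod>y\<in>Y. \<Prod>z\<in>Z. z - y)" by (rule prod.swap)
  also have "\<dots> = (\<Prod>y\<in>Y. (-1)^card Z * (\<Prod>z\<in>Z. y - z))"
    by (intro prod.cong refl) (subst prod_neg_swap, simp)
  also have "\<dots> = ((-1)^card Z)^card Y * Rset Y Z" by (simp add: prod.distrib Rset_def)
  finally show ?thesis by (simp add: ac_simps flip: power_mult)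
qed

lemma Rset_nz: "finite Y \<Longrightarrow> finite Z \<Longrightarrow> Y \<inter> Z = {} \<Longrightarrow> Rset Y Z \<noteq> (0::'a::field)"
  unfolding Rset_def by (auto simp: prod_zero_iff)

lemma poly_Rx: "poly (Rx Z) x = (\<Prod>z\<in>Z. x - z)"
  by (simp add: Rx_def poly_prod)

lemma poly_Rx_Rset: "poly (Rx Z) x = Rset {x} Z"
  by (simp add: poly_Rx Rset_def)

lemma Rx_lead: "lead_coeff (Rx (Z::'a::idom set)) = 1" unfolding Rx_def by (rule monic_prod) simp

lemma Rx_nz[simp]: "Rx (Z::'a::idom set) \<noteq> 0"
  using Rx_lead[of Z] by auto

lemma Rx_monic: "finite (Z::'a::idom set) \<Longrightarrow> degree (Rx Z) = card Z \<and> coeff (Rx Z) (card Z) = 1"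
proof -
  assume fin: "finite Z"
  have "degree (Rx Z) = (\<Sum>z\<in>Z. degree [:-z,1:])"
    unfolding Rx_def by (rule degree_prod_eq_sum_degree) auto
  hence "degree (Rx Z) = card Z" by simp
  with Rx_lead[of Z] show ?thesis by simp
qed

definition coef :: "'a::field set \<Rightarrow> 'a set \<Rightarrow> 'a set \<Rightarrow> 'a set \<Rightarrow> 'a" where
  "coef A B A' B' = Rset A' B' * Rset (A - A') (B - B') / (Rset A' (A - A') * Rset B' (B - B'))"

definition subs :: "'a set \<Rightarrow> nat \<Rightarrow> 'a set set" where
  "subs A p = {A'. A' \<subseteq> A \<and> card A' = p}"

lemma finite_subs[simp]: "finite A \<Longrightarrow> finite (subs A p)"
  unfolding subs_def by (rule finite_subset[of _ "Pow A"]) auto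

definition Tc :: "nat \<Rightarrow> nat \<Rightarrow> 'a::field set \<Rightarrow> 'a set \<Rightarrow> 'a" where
  "Tc p q A B = (\<Sum>A'\<in>subs A p. \<Sum>B'\<in>subs B q. coef A B A' B')"

lemma Syl_alt: "Syl p q A B = (\<Sum>A'\<in>subs A p. \<Sum>B'\<in>subs B q. smult (coef A B A' B') (Rx A' * Rx B'))"
  unfolding Syl_def subs_def coef_def ..

lemma poly_Syl: "poly (Syl p q A B) x = (\<Sum>A'\<in>subs A p. \<Sum>B'\<in>subs B q.
    coef A B A' B' * ((\<Prod>a\<in>A'. x - a) * (\<Prod>b\<in>B'. x - b)))"
  unfolding Syl_alt by (simp add: poly_sum poly_Rx)

lemma coeff_Syl: assumes "finite A" "finite B"
  shows "coeff (Syl p q A B) (p + q) = Tc p q A B" and "degree (Syl p q A B) \<le> p + q"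
proof -
  have deg: "degree (Rx A' * Rx B') = p + q \<and> coeff (Rx A' * Rx B') (p + q) = 1"
    if "A' \<in> subs A p" "B' \<in> subs B q" for A' B'
  proof -
    from that assms have f: "finite A'" "finite B'" "card A' = p" "card B' = q"
      by (auto simp: subs_def intro: finite_subset)
    note m1 = Rx_monic[OF f(1)] and m2 = Rx_monic[OF f(2)]
    have "degree (Rx A' * Rx B') = p + q" using m1 m2 f
      by (simp add: degree_mult_eq)
    moreover have "coeff (Rx A' * Rx B') (p + q) = 1"
      using coeff_mult_degree_sum[of "Rx A'" "Rx B'"] m1 m2 f by simp
    ultimately show ?thesis by simp
  qed
  show "coeff (Syl p q A B) (p + q) = Tc p q A B"
    unfolding Syl_alt Tc_def coeff_sum coeff_smult
    by (intro sum.cong refl) (simp add: deg)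
  have "degree (smult (coef A B A' B') (Rx A' * Rx B')) \<le> p + q"
    if "A' \<in> subs A p" "B' \<in> subs B q" for A' B'
    using degree_smult_le[of "coef A B A' B'" "Rx A' * Rx B'"] deg[OF that] by simp
  then show "degree (Syl p q A B) \<le> p + q"
    unfolding Syl_alt
    by (intro degree_sum_le) (auto simp: assms)
qed

lemma subs_mem: "A' \<in> subs A p \<longleftrightarrow> A' \<subseteq> A \<and> card A' = p" by (simp add: subs_def)

lemma subs_big: "finite A \<Longrightarrow> card A < p \<Longrightarrow> subs A p = {}"
  by (auto simp: subs_def dest: card_mono)

lemma subs_full: "finite A \<Longrightarrow> subs A (card A) = {A}"
  by (auto simp: subs_def dest: card_subset_eq)

lemma subs_zero: assumes "finite A" shows "subs A 0 = {{}}"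
proof -
  have "x = {}" if "x \<subseteq> A" "card x = 0" for x
    using that assms finite_subset by (auto simp: card_eq_0_iff)
  thus ?thesis by (auto simp: subs_def)
qed

lemma neg1_pow_eq: "even (x + y) \<Longrightarrow> (-1::'a::ring_1)^x = (-1)^y"
  by (auto simp: minus_one_power_iff)

lemma poly_Syl_in_A:
  fixes A B :: "'a::field set"
  assumes fA: "finite A" and fB: "finite B" and a: "a \<in> A"
  shows "poly (Syl p q A B) a = (-1)^p * (\<Prod>b\<in>B. a - b) * Tc p q (A - {a}) B"
proof -
  define A1 where "A1 = A - {a}"
  have fA1: "finite A1" using fA by (simp add: A1_def)
  have "poly (Syl p q A B) a = (\<Sum>A'\<in>subs A p. \<Sum>B'\<in>subs B q.
    coef A B A' B' * ((\<Prod>x\<in>A'. a - x) * (\<Prod>b\<in>B'. a - b)))" by (rule poly_Syl)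
  also have "\<dots> = (\<Sum>A'\<in>subs A1 p. \<Sum>B'\<in>subs B q.
    coef A B A' B' * ((\<Prod>x\<in>A'. a - x) * (\<Prod>b\<in>B'. a - b)))"
  proof (rule sum.mono_neutral_right)
    show "finite (subs A p)" using fA by simp
    show "subs A1 p \<subseteq> subs A p" by (auto simp: subs_def A1_def)
    show "\<forall>A'\<in>subs A p - subs A1 p. (\<Sum>B'\<in>subs B q.
      coef A B A' B' * ((\<Prod>x\<in>A'. a - x) * (\<Prod>b\<in>B'. a - b))) = 0"
    proof
      fix A' assume "A' \<in> subs A p - subs A1 p"
      hence "a \<in> A'" "finite A'" using fA by (auto simp: subs_def A1_def intro: finite_subset)
      hence "(\<Prod>x\<in>A'. a - x) = 0" by (simp add: prod_zero_iff)
      thus "(\<Sum>B'\<in>subs B q. coef A B A' B' * ((\<Prod>x\<in>A'. a - x) * (\<Prod>b\<in>B'. a - b))) = 0"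
        by simp
    qed
  qed
  also have "\<dots> = (\<Sum>A'\<in>subs A1 p. \<Sum>B'\<in>subs B q.
     (-1)^p * (\<Prod>b\<in>B. a - b) * coef A1 B A' B')"
  proof (intro sum.cong refl)
    fix A' B' assume A': "A' \<in> subs A1 p" and B': "B' \<in> subs B q"
    have sub: "A' \<subseteq> A1" "B' \<subseteq> B" and cA: "card A' = p" using A' B' by (auto simp: subs_def)
    have fA': "finite A'" "finite B'" using sub fA1 fB by (auto intro: finite_subset)
    have aA': "a \<notin> A'" using sub by (auto simp: A1_def)
    have AA: "A - A' = insert a (A1 - A')" using a sub by (auto simp: A1_def)
    have aA1: "a \<notin> A1 - A'" by (simp add: A1_def)
    have fD: "finite (A1 - A')" "finite (B - B')" using fA1 fB by auto
    have e1: "Rset (A - A') (B - B') = (\<Prod>z\<in>B - B'. a - z) * Rset (A1 - A') (B - B')"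
      unfolding AA by (rule Rset_insert_left[OF fD(1) aA1])
    have e2: "Rset A' (A - A') = (\<Prod>y\<in>A'. y - a) * Rset A' (A1 - A')"
      unfolding AA by (rule Rset_insert_right[OF fD(1) aA1])
    have e3: "(\<Prod>x\<in>A'. a - x) = (-1)^p * (\<Prod>x\<in>A'. x - a)"
      using prod_neg_swap[of a A'] cA by simp
    have e4: "(\<Prod>b\<in>B. a - b) = (\<Prod>b\<in>B'. a - b) * (\<Prod>b\<in>B - B'. a - b)"
      using prod.subset_diff[OF sub(2) fB] by (simp add: mult.commute)
    have n1: "(\<Prod>y\<in>A'. y - a) \<noteq> 0" using aA' fA' by (auto simp: prod_zero_iff)
    have n2: "Rset A' (A1 - A') \<noteq> 0" by (rule Rset_nz) (use fA' fD in auto)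
    have n3: "Rset B' (B - B') \<noteq> 0" by (rule Rset_nz) (use fA' fD in auto)
    show "coef A B A' B' * ((\<Prod>x\<in>A'. a - x) * (\<Prod>b\<in>B'. a - b)) =
      (-1)^p * (\<Prod>b\<in>B. a - b) * coef A1 B A' B'"
      unfolding coef_def e1 e2 e3 e4 using n1 n2 n3 by (simp add: field_simps)
  qed
  also have "\<dots> = (-1)^p * (\<Prod>b\<in>B. a - b) * Tc p q A1 B"
    by (simp add: Tc_def sum_distrib_left)
  finally show ?thesis by (simp add: A1_def)
qed

lemma coef_swap:
  fixes A B :: "'a::field set"
  assumes fA: "finite A" and fB: "finite B" and A': "A' \<in> subs A p" and B': "B' \<in> subs B q"
  shows "coef B A B' A' = (-1)^(p * q + (card A - p) * (card B - q)) * coef A B A' B'"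
proof -
  have sub: "A' \<subseteq> A" "B' \<subseteq> B" and c: "card A' = p" "card B' = q" using A' B' by (auto simp: subs_def)
  have fA': "finite A'" "finite B'" using sub fA fB by (auto intro: finite_subset)
  have cd: "card (A - A') = card A - p" "card (B - B') = card B - q"
    using c sub fA' by (auto simp: card_Diff_subset)
  have "coef B A B' A' = ((-1)^(p*q) * Rset A' B') * ((-1)^((card A - p) * (card B - q)) *
     Rset (A - A') (B - B')) / (Rset B' (B - B') * Rset A' (A - A'))"
    unfolding coef_def Rset_swap[of B' A'] Rset_swap[of "B - B'" "A - A'"] c cd ..
  also have "\<dots> = (-1)^(p * q + (card A - p) * (card B - q)) * coef A B A' B'"
    unfolding coef_def power_add by (simp add: field_simps)
  finally show ?thesis .
qed

lemma Syl_swap: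
  fixes A B :: "'a::field set"
  assumes fA: "finite A" and fB: "finite B"
  shows "Syl q p B A = smult ((-1)^(p * q + (card A - p) * (card B - q))) (Syl p q A B)"
proof -
  have "Syl q p B A = (\<Sum>B'\<in>subs B q. \<Sum>A'\<in>subs A p. smult (coef B A B' A') (Rx B' * Rx A'))"
    by (rule Syl_alt)
  also have "\<dots> = (\<Sum>A'\<in>subs A p. \<Sum>B'\<in>subs B q. smult (coef B A B' A') (Rx B' * Rx A'))"
    by (rule sum.swap)
  also have "\<dots> = (\<Sum>A'\<in>subs A p. \<Sum>B'\<in>subs B q.
     smult ((-1)^(p * q + (card A - p) * (card B - q))) (smult (coef A B A' B') (Rx A' * Rx B')))"
    by (intro sum.cong refl) (simp add: coef_swap[OF fA fB] mult.commute)
  also have "\<dots> = smult ((-1)^(p * q + (card A - p) * (card B - q))) (Syl p q A B)"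
    unfolding Syl_alt by (simp add: smult_sum2)
  finally show ?thesis .
qed

lemma Tc_swap:
  fixes A B :: "'a::field set"
  assumes fA: "finite A" and fB: "finite B"
  shows "Tc q p B A = (-1)^(p * q + (card A - p) * (card B - q)) * Tc p q A B"
  using arg_cong[OF Syl_swap[OF fA fB, of q p], of "\<lambda>P. coeff P (p + q)"]
    coeff_Syl(1)[OF fA fB, of p q] coeff_Syl(1)[OF fB fA, of q p]
  by (simp add: add.commute)

lemma poly_Syl_in_B:
  fixes A B :: "'a::field set"
  assumes fA: "finite A" and fB: "finite B" and b: "b \<in> B" and p: "p \<le> card A"
  shows "poly (Syl p q A B) b = (-1)^(q + (card A - p)) * (\<Prod>a\<in>A. b - a) * Tc p q A (B - {b})"
proof (cases "q < card B")
  case False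
  have "card B > 0" using b fB card_gt_0_iff by auto
  hence "card (B - {b}) < q" using False b fB by (simp add: card_Diff_singleton)
  hence T0: "Tc p q A (B - {b}) = 0" unfolding Tc_def using fB by (simp add: subs_big)
  have "poly (Syl p q A B) b = 0" unfolding poly_Syl
  proof (intro sum.neutral ballI)
    fix A' B' assume "B' \<in> subs B q"
    hence "B' \<subseteq> B" "card B \<le> card B'" using False by (auto simp: subs_def)
    hence "B' = B" using fB by (simp add: card_seteq)
    hence "(\<Prod>x\<in>B'. b - x) = 0" using b fB by (simp add: prod_zero_iff)
    thus "coef A B A' B' * ((\<Prod>a\<in>A'. b - a) * (\<Prod>x\<in>B'. b - x)) = 0" by simp
  qed
  then show ?thesis using T0 by simp
next
  case True
  define e where "e = q * p + (card B - q) * (card A - p)"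
  define e' where "e' = p * q + (card A - p) * (card (B - {b}) - q)"
  have "poly (Syl p q A B) b = (-1)^e * poly (Syl q p B A) b"
    using Syl_swap[OF fB fA, where p=q and q=p] by (simp add: e_def)
  also have "\<dots> = (-1)^e * ((-1)^q * (\<Prod>a\<in>A. b - a) * Tc q p (B - {b}) A)"
    by (simp add: poly_Syl_in_A[OF fB fA b])
  also have "Tc q p (B - {b}) A = (-1)^e' * Tc p q A (B - {b})"
    unfolding e'_def by (rule Tc_swap) (use fA fB in auto)
  also have "(-1)^e * ((-1)^q * (\<Prod>a\<in>A. b - a) * ((-1)^e' * Tc p q A (B - {b}))) =
     (-1)^(e + q + e') * (\<Prod>a\<in>A. b - a) * Tc p q A (B - {b})"
    by (simp add: power_add)
  also have "(-1)^(e + q + e') = ((-1)^(q + (card A - p)) :: 'a)"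
  proof (rule neg1_pow_eq)
    obtain k where k: "card B - q = Suc k" using True by (metis Suc_diff_Suc)
    have k2: "card (B - {b}) - q = k" using k b fB by (simp add: card_Diff_singleton)
    obtain M where M: "card A - p = M" by simp
    show "even (e + q + e' + (q + (card A - p)))"
      unfolding e_def e'_def k k2 M by (cases "even p"; cases "even q"; cases "even M"; cases "even k"; simp)
  qed
  finally show ?thesis .
qed

lemma poly_eq_on_set:
  fixes P Q :: "'a::idom poly"
  assumes "degree P \<le> d" "degree Q \<le> d" "finite S" "d < card S" "\<forall>x\<in>S. poly P x = poly Q x"
  shows "P = Q"
proof (rule ccontr)
  assume "P \<noteq> Q"
  hence nz: "P - Q \<noteq> 0" by simp
  have "S \<subseteq> {x. poly (P - Q) x = 0}" using assms(5) by auto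
  hence "card S \<le> card {x. poly (P - Q) x = 0}"
    by (rule card_mono[OF poly_roots_finite[OF nz]])
  also have "\<dots> \<le> degree (P - Q)" by (rule card_poly_roots_bound[OF nz])
  also have "\<dots> \<le> d" using assms(1,2) degree_diff_le by blast
  finally show False using assms(4) by simp
qed

lemma coef_triv1: "coef A B {} B = (1::'a::field)" by (simp add: coef_def)
lemma coef_triv2: "coef A B A {} = (1::'a::field)" by (simp add: coef_def)

lemma Tc_0_full: "finite A \<Longrightarrow> finite B \<Longrightarrow> Tc 0 (card B) A B = (1::'a::field)"
  by (simp add: Tc_def subs_zero subs_full coef_triv1)

lemma Tc_full_0: "finite A \<Longrightarrow> finite B \<Longrightarrow> Tc (card A) 0 A B = (1::'a::field)"
  by (simp add: Tc_def subs_zero subs_full coef_triv2)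

lemma neg1_div: "x / ((-1::'a::field)^k * y) = (-1)^k * (x / y)"
  by (cases "even k") (auto simp: minus_one_power_iff)

lemma neg1_div2: "x / (y * (-1::'a::field)^k) = (-1)^k * (x / y)"
  using neg1_div[of x k y] by (simp add: mult.commute)

lemma div_sign:
  fixes s t x y z :: "'a::field"
  assumes "s * s = 1" "t * t = 1"
  shows "x / (s * y * (t * z)) = s * t * (x / (y * z))"
proof -
  have st: "(s*t)*(s*t) = 1" using assms by (simp add: algebra_simps)
  have inv: "inverse (s*t) = s*t" using st by (rule inverse_unique)
  have inv2: "inverse s * inverse t = s * t" using inv by (simp add: inverse_mult_distrib)
  have "x / (s * y * (t * z)) = x * inverse ((s*t) * (y*z))" by (simp add: divide_inverse ac_simps)
  also have "\<dots> = (s * t) * (x / (y * z))"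
    by (simp add: inverse_mult_distrib inv2 divide_inverse ac_simps)
  finally show ?thesis .
qed

lemma neg1_sq: "(-1::'a::ring_1)^k * (-1)^k = 1"
  by (simp flip: power_add add: minus_one_power_iff)

lemma coef_compl:
  fixes A B :: "'a::field set"
  assumes fA: "finite A" and fB: "finite B" and s: "A'' \<subseteq> A" "B'' \<subseteq> B"
  shows "coef A B (A - A'') (B - B'') =
    (-1)^(card A'' * card (A - A'') + card B'' * card (B - B'')) * coef A B A'' B''"
proof -
  have d: "A - (A - A'') = A''" "B - (B - B'') = B''" using s by auto
  show ?thesis unfolding coef_def d
    Rset_swap[of "A - A''" A''] Rset_swap[of "B - B''" B''] power_add
    by (subst div_sign[OF neg1_sq neg1_sq]) (simp add: ac_simps)
qed

lemma sum_subs_compl: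
  assumes fA: "finite A" and p: "p \<le> card A"
  shows "(\<Sum>A'\<in>subs A p. h A') = (\<Sum>A''\<in>subs A (card A - p). h (A - A''))"
proof -
  have inj: "inj_on (\<lambda>X. A - X) (subs A (card A - p))"
    by (rule inj_onI) (auto simp: subs_def)
  have img: "(\<lambda>X. A - X) ` subs A (card A - p) = subs A p"
  proof
    show "(\<lambda>X. A - X) ` subs A (card A - p) \<subseteq> subs A p"
    proof
      fix Y assume "Y \<in> (\<lambda>X. A - X) ` subs A (card A - p)"
      then obtain X where X: "X \<subseteq> A" "card X = card A - p" "Y = A - X" by (auto simp: subs_def)
      have "finite X" using X fA finite_subset by auto
      hence "card Y = p" using X p by (simp add: card_Diff_subset)
      thus "Y \<in> subs A p" using X by (auto simp: subs_def)
    qed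
    show "subs A p \<subseteq> (\<lambda>X. A - X) ` subs A (card A - p)"
    proof
      fix X assume X: "X \<in> subs A p"
      hence "X \<subseteq> A" "card X = p" by (auto simp: subs_def)
      moreover have "finite X" using \<open>X \<subseteq> A\<close> fA finite_subset by auto
      ultimately have "A - X \<in> subs A (card A - p)" "X = A - (A - X)"
        by (auto simp: subs_def card_Diff_subset)
      thus "X \<in> (\<lambda>X. A - X) ` subs A (card A - p)" by blast
    qed
  qed
  show ?thesis using sum.reindex[OF inj, of h] img by simp
qed

lemma REC_term1:
  fixes A0 B :: "'a::field set"
  assumes fA: "finite A0" and fB: "finite B" and a0: "a0 \<notin> A0"
    and A1: "A1 \<subseteq> A0" and B': "B' \<subseteq> B"
  shows "coef (insert a0 A0) B (insert a0 A1) B' * (\<Prod>a\<in>A0. a0 - a) =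
     coef A0 B A1 B' * ((\<Prod>x\<in>A1. a0 - x) * (\<Prod>b\<in>B'. a0 - b))"
proof -
  have fA1: "finite A1" "finite B'" using A1 B' fA fB finite_subset by auto
  have a1: "a0 \<notin> A1" using A1 a0 by auto
  have D: "insert a0 A0 - insert a0 A1 = A0 - A1" using a0 by auto
  have fD: "finite (A0 - A1)" "finite (B - B')" using fA fB by auto
  have aD: "a0 \<notin> A0 - A1" using a0 by auto
  have e1: "Rset (insert a0 A1) B' = (\<Prod>z\<in>B'. a0 - z) * Rset A1 B'"
    by (rule Rset_insert_left[OF fA1(1) a1])
  have e2: "Rset (insert a0 A1) (A0 - A1) = (\<Prod>z\<in>A0 - A1. a0 - z) * Rset A1 (A0 - A1)"
    by (rule Rset_insert_left[OF fA1(1) a1])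
  have e3: "(\<Prod>a\<in>A0. a0 - a) = (\<Prod>a\<in>A1. a0 - a) * (\<Prod>a\<in>A0 - A1. a0 - a)"
    using prod.subset_diff[OF A1 fA] by (simp add: mult.commute)
  have n1: "(\<Prod>z\<in>A0 - A1. a0 - z) \<noteq> 0" using aD fD by (auto simp: prod_zero_iff)
  have n2: "Rset A1 (A0 - A1) \<noteq> 0" by (rule Rset_nz) (use fA1 fD in auto)
  have n3: "Rset B' (B - B') \<noteq> 0" by (rule Rset_nz) (use fA1 fD in auto)
  show ?thesis unfolding coef_def D e1 e2 e3 using n1 n2 n3 by (simp add: field_simps)
qed

lemma REC_term2:
  fixes A0 B :: "'a::field set"
  assumes fA: "finite A0" and fB: "finite B" and a0: "a0 \<notin> A0"
    and A': "A' \<subseteq> A0" and B': "B' \<subseteq> B"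
  shows "coef (insert a0 A0) B A' B' * (\<Prod>a\<in>A0. a0 - a) =
     (-1)^card A' * (coef A0 B A' B' * ((\<Prod>x\<in>A0 - A'. a0 - x) * (\<Prod>b\<in>B - B'. a0 - b)))"
proof -
  have fA1: "finite A'" "finite B'" using A' B' fA fB finite_subset by auto
  have a1: "a0 \<notin> A'" using A' a0 by auto
  have AA: "insert a0 A0 - A' = insert a0 (A0 - A')" using a0 A' by auto
  have fD: "finite (A0 - A')" "finite (B - B')" using fA fB by auto
  have aD: "a0 \<notin> A0 - A'" using a0 by auto
  have e1: "Rset (insert a0 (A0 - A')) (B - B') = (\<Prod>z\<in>B - B'. a0 - z) * Rset (A0 - A') (B - B')"
    by (rule Rset_insert_left[OF fD(1) aD])
  have e2: "Rset A' (insert a0 (A0 - A')) = (\<Prod>y\<in>A'. y - a0) * Rset A' (A0 - A')"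
    by (rule Rset_insert_right[OF fD(1) aD])
  have e3: "(\<Prod>a\<in>A0. a0 - a) = (\<Prod>a\<in>A'. a0 - a) * (\<Prod>a\<in>A0 - A'. a0 - a)"
    using prod.subset_diff[OF A' fA] by (simp add: mult.commute)
  have e4: "(\<Prod>a\<in>A'. a0 - a) = (-1)^card A' * (\<Prod>a\<in>A'. a - a0)" by (rule prod_neg_swap)
  have n1: "(\<Prod>y\<in>A'. y - a0) \<noteq> 0" using a1 fA1 by (auto simp: prod_zero_iff)
  have n2: "Rset A' (A0 - A') \<noteq> 0" by (rule Rset_nz) (use fA1 fD in auto)
  have n3: "Rset B' (B - B') \<noteq> 0" by (rule Rset_nz) (use fA1 fD in auto)
  show ?thesis unfolding coef_def AA e1 e2 e3 e4 using n1 n2 n3 by (simp add: field_simps)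
qed

lemma REC:
  fixes A0 B :: "'a::field set"
  assumes fA: "finite A0" and fB: "finite B" and a0: "a0 \<notin> A0" and p: "1 \<le> p" and q: "1 \<le> q"
    and cA: "card A0 + 1 = p + q" and cB: "card B = p + q"
  shows "Tc p q (insert a0 A0) B * (\<Prod>a\<in>A0. a0 - a) =
    poly (Syl (p - 1) q A0 B) a0 + poly (Syl (q - 1) p A0 B) a0"
proof -
  define A where "A = insert a0 A0"
  define R where "R = (\<Prod>a\<in>A0. a0 - a)"
  define g where "g A' = (\<Sum>B'\<in>subs B q. coef A B A' B')" for A'
  have split: "subs A p = insert a0 ` subs A0 (p - 1) \<union> subs A0 p"
  proof
    show "subs A p \<subseteq> insert a0 ` subs A0 (p - 1) \<union> subs A0 p"
    proof
      fix X assume X: "X \<in> subs A p"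
      show "X \<in> insert a0 ` subs A0 (p - 1) \<union> subs A0 p"
      proof (cases "a0 \<in> X")
        case True
        have fX: "finite X" using X fA finite_subset by (auto simp: subs_def A_def)
        have "X - {a0} \<in> subs A0 (p - 1)" using X True fX a0 by (auto simp: subs_def A_def)
        moreover have "X = insert a0 (X - {a0})" using True by auto
        ultimately show ?thesis by blast
      next
        case False thus ?thesis using X by (auto simp: subs_def A_def)
      qed
    qed
    show "insert a0 ` subs A0 (p - 1) \<union> subs A0 p \<subseteq> subs A p"
    proof
      fix X assume "X \<in> insert a0 ` subs A0 (p - 1) \<union> subs A0 p"
      then consider Y where "Y \<in> subs A0 (p - 1)" "X = insert a0 Y" | "X \<in> subs A0 p" by blast
      then show "X \<in> subs A p"
      proof cases
        case 1
        have "finite Y" "a0 \<notin> Y" using 1 fA a0 finite_subset by (auto simp: subs_def)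
        thus ?thesis using 1 p by (auto simp: subs_def A_def)
      next
        case 2 thus ?thesis by (auto simp: subs_def A_def)
      qed
    qed
  qed
  have disj: "insert a0 ` subs A0 (p - 1) \<inter> subs A0 p = {}" using a0 by (auto simp: subs_def)
  have inj: "inj_on (insert a0) (subs A0 (p - 1))"
    using a0 by (auto simp: inj_on_def subs_def)
  have "Tc p q A B = (\<Sum>A'\<in>subs A p. g A')" by (simp add: Tc_def g_def)
  also have "\<dots> = (\<Sum>A'\<in>insert a0 ` subs A0 (p - 1). g A') + (\<Sum>A'\<in>subs A0 p. g A')"
    unfolding split by (rule sum.union_disjoint) (use fA disj in auto)
  also have "(\<Sum>A'\<in>insert a0 ` subs A0 (p - 1). g A') = (\<Sum>A1\<in>subs A0 (p - 1). g (insert a0 A1))"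
    by (rule sum.reindex[OF inj, unfolded comp_def])
  finally have T: "Tc p q A B * R = (\<Sum>A1\<in>subs A0 (p - 1). g (insert a0 A1) * R) + (\<Sum>A'\<in>subs A0 p. g A' * R)"
    by (simp add: sum_distrib_right distrib_right)
  have P1: "(\<Sum>A1\<in>subs A0 (p - 1). g (insert a0 A1) * R) = poly (Syl (p - 1) q A0 B) a0"
    unfolding poly_Syl g_def sum_distrib_right
    by (intro sum.cong refl, unfold A_def R_def, rule REC_term1[OF fA fB a0]) (auto simp: subs_def)
  have P2a: "(\<Sum>A'\<in>subs A0 p. g A' * R) = (\<Sum>A'\<in>subs A0 p. \<Sum>B'\<in>subs B q.
     (-1)^p * (coef A0 B A' B' * ((\<Prod>x\<in>A0 - A'. a0 - x) * (\<Prod>b\<in>B - B'. a0 - b))))"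
    unfolding g_def sum_distrib_right
    by (intro sum.cong refl, unfold A_def R_def, subst REC_term2[OF fA fB a0]) (auto simp: subs_def)
  have cA0: "card A0 - p = q - 1" and cB0: "card B - q = p" using cA cB p q by auto
  have pA: "p \<le> card A0" and qB: "q \<le> card B" using cA cB q by auto
  have P2b: "(\<Sum>A'\<in>subs A0 p. \<Sum>B'\<in>subs B q.
     (-1)^p * (coef A0 B A' B' * ((\<Prod>x\<in>A0 - A'. a0 - x) * (\<Prod>b\<in>B - B'. a0 - b)))) =
     (\<Sum>A''\<in>subs A0 (q - 1). \<Sum>B''\<in>subs B p.
     (-1)^p * (coef A0 B (A0 - A'') (B - B'') * ((\<Prod>x\<in>A0 - (A0 - A''). a0 - x) * (\<Prod>b\<in>B - (B - B''). a0 - b))))"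
    unfolding sum_subs_compl[OF fA pA] sum_subs_compl[OF fB qB] cA0 cB0 ..
  have P2c: "\<dots> = poly (Syl (q - 1) p A0 B) a0"
    unfolding poly_Syl
  proof (intro sum.cong refl)
    fix A'' B'' assume A'': "A'' \<in> subs A0 (q - 1)" and B'': "B'' \<in> subs B p"
    have s: "A'' \<subseteq> A0" "B'' \<subseteq> B" "card A'' = q - 1" "card B'' = p" using A'' B'' by (auto simp: subs_def)
    have fs: "finite A''" "finite B''" using s fA fB finite_subset by auto
    have cc: "card (A0 - A'') = p" "card (B - B'') = q" using s fs cA cB p q by (auto simp: card_Diff_subset)
    have d: "A0 - (A0 - A'') = A''" "B - (B - B'') = B''" using s by auto
    have sg: "(-1::'a)^p * (-1)^(card A'' * card (A0 - A'') + card B'' * card (B - B'')) = 1"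
      unfolding cc s(3,4)
    proof -
      have "p + ((q - 1) * p + p * q) = 2 * (p * q)" using q by (cases q) (auto simp: algebra_simps)
      thus "(-1::'a)^p * (-1)^((q - 1) * p + p * q) = 1"
        by (simp only: power_add[symmetric] power_mult) simp
    qed
    show "(-1)^p * (coef A0 B (A0 - A'') (B - B'') * ((\<Prod>x\<in>A0 - (A0 - A''). a0 - x) * (\<Prod>b\<in>B - (B - B''). a0 - b))) =
       coef A0 B A'' B'' * ((\<Prod>a\<in>A''. a0 - a) * (\<Prod>b\<in>B''. a0 - b))"
      unfolding d coef_compl[OF fA fB s(1,2)] using sg by (simp add: mult.assoc[symmetric])
  qed
  show ?thesis using T P1 P2a P2b P2c by (simp add: A_def R_def)
qed

lemma Syl0_small:
  fixes A B :: "'a::field set"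
  assumes "finite A" "finite B" "card A \<le> k" "k < card B"
  shows "Syl 0 k A B = smult (if card A = k then 1 else if card B = k + 1 then (-1)^(k + card A) else 0) (Rx A)"
  using assms
proof (induction "card B" arbitrary: B rule: less_induct)
  case less
  note fA = less.prems(1) and fB = less.prems(2) and kA = less.prems(3) and kB = less.prems(4)
  let ?c = "(if card A = k then 1 else if card B = k + 1 then (-1)^(k + card A) else 0) :: 'a"
  show ?case
  proof (rule poly_eq_on_set[where d = k and S = B])
    show "degree (Syl 0 k A B) \<le> k" using coeff_Syl(2)[OF fA fB, of 0 k] by simp
    show "degree (smult ?c (Rx A)) \<le> k" using degree_smult_le[of ?c "Rx A"] Rx_monic[OF fA] kA by simp
    show "finite B" "k < card B" by fact+
    show "\<forall>b\<in>B. poly (Syl 0 k A B) b = poly (smult ?c (Rx A)) b"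
    proof
      fix b assume b: "b \<in> B"
      have cB1: "card (B - {b}) = card B - 1" using b fB by (simp add: card_Diff_singleton)
      have T: "Tc 0 k A (B - {b}) = (if card A = k then 1 else if card B = k + 1 then 1 else 0)"
      proof (cases "card B = k + 1")
        case True
        hence "card (B - {b}) = k" using cB1 by simp
        hence "Tc 0 k A (B - {b}) = 1" using Tc_0_full[OF fA, of "B - {b}"] fB by simp
        thus ?thesis using True by simp
      next
        case False
        have lt: "card (B - {b}) < card B" using cB1 kB by simp
        have k2: "k < card (B - {b})" using cB1 kB False by simp
        have IH: "Syl 0 k A (B - {b}) = smult (if card A = k then 1 else if card (B - {b}) = k + 1
           then (-1)^(k + card A) else 0) (Rx A)"
          by (rule less.hyps[OF lt fA _ kA k2]) (use fB in simp)
        have "Tc 0 k A (B - {b}) = coeff (Syl 0 k A (B - {b})) k"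
          using coeff_Syl(1)[OF fA, of "B - {b}" 0 k] fB by simp
        also have "\<dots> = (if card A = k then 1 else 0)"
        proof (cases "card A = k")
          case True thus ?thesis unfolding IH using Rx_monic[OF fA] by simp
        next
          case F: False
          have "coeff (Rx A) k = 0" using Rx_monic[OF fA] kA F by (intro coeff_eq_0) simp
          thus ?thesis unfolding IH using F by simp
        qed
        finally show ?thesis using False by simp
      qed
      have "poly (Syl 0 k A B) b = (-1)^(k + (card A - 0)) * (\<Prod>a\<in>A. b - a) * Tc 0 k A (B - {b})"
        by (rule poly_Syl_in_B[OF fA fB b]) simp
      also have "\<dots> = poly (smult ?c (Rx A)) b"
        unfolding T poly_smult poly_Rx by (auto simp flip: power_add)
      finally show "poly (Syl 0 k A B) b = poly (smult ?c (Rx A)) b" .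
    qed
  qed
qed

lemma Tc0_small:
  fixes A B :: "'a::field set"
  assumes "finite A" "finite B" "card A \<le> k" "k < card B"
  shows "Tc 0 k A B = (if card A = k then 1 else 0)"
proof -
  have "Tc 0 k A B = coeff (Syl 0 k A B) k" using coeff_Syl(1)[OF assms(1,2), of 0 k] by simp
  also have "\<dots> = (if card A = k then 1 else 0)"
  proof (cases "card A = k")
    case True thus ?thesis unfolding Syl0_small[OF assms] using Rx_monic[OF assms(1)] by simp
  next
    case F: False
    have "coeff (Rx A) k = 0" using Rx_monic[OF assms(1)] assms(3) F by (intro coeff_eq_0) simp
    thus ?thesis unfolding Syl0_small[OF assms] using F by simp
  qed
  finally show ?thesis .
qed

lemma Syl0_eq_Rx:
  fixes A B :: "'a::field set"
  assumes "finite A" "finite B" "card A = k" "k < card B"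
  shows "Syl 0 k A B = Rx A"
  using Syl0_small[OF assms(1,2) _ assms(4)] assms(3) by simp

lemma binom_pascal_aux:
  assumes "1 \<le> p" "1 \<le> q"
  shows "((p - 1 + q) choose (p - 1)) + ((q - 1 + p) choose (q - 1)) = (p + q) choose p"
proof -
  obtain p1 q1 where pq: "p = Suc p1" "q = Suc q1" using assms by (metis Suc_le_D One_nat_def)
  have "(q1 + Suc p1) choose q1 = (q1 + Suc p1) choose (Suc p1)"
    by (subst binomial_symmetric) auto
  hence "((p - 1 + q) choose (p - 1)) + ((q - 1 + p) choose (q - 1)) =
     ((p1 + Suc q1) choose p1) + ((p1 + Suc q1) choose Suc p1)" using pq by (simp add: add.commute)
  also have "\<dots> = Suc (p1 + Suc q1) choose Suc p1" by simp
  finally show ?thesis using pq by simp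
qed

lemma main_PC:
  fixes A B :: "'a::field set"
  assumes "finite A" "finite B" "p + q \<le> card A" "p + q \<le> card B"
  shows "Tc p q A B = (-1)^(p * (card A - (p + q))) * of_nat ((p + q) choose p) * Tc 0 (p + q) A B \<and>
    (p + q < card A \<or> p + q < card B \<longrightarrow>
      Syl p q A B = smult ((-1)^(p * (card A - (p + q))) * of_nat ((p + q) choose p)) (Syl 0 (p + q) A B))"
  using assms
proof (induction "card A + card B" arbitrary: A B p q rule: less_induct)
  case less
  note fA = less.prems(1) and fB = less.prems(2) and dA = less.prems(3) and dB = less.prems(4)
  define d where "d = p + q"
  define c where "c = ((-1)^(p * (card A - d)) * of_nat (d choose p) :: 'a)"
  have pA: "p \<le> card A" using dA by simp
  have P: "Syl p q A B = smult c (Syl 0 d A B)" if h: "d < card A \<or> d < card B"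
  proof (cases "d < card B")
    case True
    show ?thesis
    proof (rule poly_eq_on_set[where d = d and S = B])
      show "degree (Syl p q A B) \<le> d" using coeff_Syl(2)[OF fA fB, of p q] by (simp add: d_def)
      show "degree (smult c (Syl 0 d A B)) \<le> d"
        using coeff_Syl(2)[OF fA fB, of 0 d] degree_smult_le[of c "Syl 0 d A B"] by simp
      show "finite B" "d < card B" by fact+
      show "\<forall>b\<in>B. poly (Syl p q A B) b = poly (smult c (Syl 0 d A B)) b"
      proof
        fix b assume b: "b \<in> B"
        have cB1: "card (B - {b}) = card B - 1" using b fB by (simp add: card_Diff_singleton)
        have lt: "card A + card (B - {b}) < card A + card B" using cB1 True by simp
        have IH: "Tc p q A (B - {b}) = c * Tc 0 d A (B - {b})"
          using less.hyps[OF lt fA _ dA] fB cB1 True by (simp add: c_def d_def)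
        have "poly (Syl p q A B) b = (-1)^(q + (card A - p)) * (\<Prod>a\<in>A. b - a) * Tc p q A (B - {b})"
          by (rule poly_Syl_in_B[OF fA fB b pA])
        also have "(-1)^(q + (card A - p)) = ((-1)^(d + (card A - 0)) :: 'a)"
          by (rule neg1_pow_eq) (use pA in \<open>cases "even q"; cases "even (card A)"; simp add: d_def\<close>)
        also have "\<dots> * (\<Prod>a\<in>A. b - a) * Tc p q A (B - {b}) =
           c * ((-1)^(d + (card A - 0)) * (\<Prod>a\<in>A. b - a) * Tc 0 d A (B - {b}))"
          unfolding IH by (simp add: ac_simps)
        also have "\<dots> = poly (smult c (Syl 0 d A B)) b"
          by (simp add: poly_Syl_in_B[OF fA fB b])
        finally show "poly (Syl p q A B) b = poly (smult c (Syl 0 d A B)) b" .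
      qed
    qed
  next
    case False
    hence dA': "d < card A" using h by simp
    show ?thesis
    proof (rule poly_eq_on_set[where d = d and S = A])
      show "degree (Syl p q A B) \<le> d" using coeff_Syl(2)[OF fA fB, of p q] by (simp add: d_def)
      show "degree (smult c (Syl 0 d A B)) \<le> d"
        using coeff_Syl(2)[OF fA fB, of 0 d] degree_smult_le[of c "Syl 0 d A B"] by simp
      show "finite A" "d < card A" by fact+
      show "\<forall>a\<in>A. poly (Syl p q A B) a = poly (smult c (Syl 0 d A B)) a"
      proof
        fix a assume a: "a \<in> A"
        have cA1: "card (A - {a}) = card A - 1" using a fA by (simp add: card_Diff_singleton)
        have lt: "card (A - {a}) + card B < card A + card B" using cA1 dA' by simp
        obtain j where j: "card A - d = Suc j" using dA' by (metis Suc_diff_Suc)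
        have j2: "card (A - {a}) - d = j" using j cA1 by simp
        have IH: "Tc p q (A - {a}) B = (-1)^(p * j) * of_nat (d choose p) * Tc 0 d (A - {a}) B"
          using less.hyps[OF lt _ fB _ dB] fA cA1 dA' j2 by (simp add: d_def)
        have "poly (Syl p q A B) a = (-1)^p * (\<Prod>b\<in>B. a - b) * Tc p q (A - {a}) B"
          by (rule poly_Syl_in_A[OF fA fB a])
        also have "\<dots> = c * ((-1)^0 * (\<Prod>b\<in>B. a - b) * Tc 0 d (A - {a}) B)"
          unfolding IH c_def j by (simp add: power_add ac_simps)
        also have "\<dots> = poly (smult c (Syl 0 d A B)) a"
          by (simp add: poly_Syl_in_A[OF fA fB a])
        finally show "poly (Syl p q A B) a = poly (smult c (Syl 0 d A B)) a" .
      qed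
    qed
  qed
  have C: "Tc p q A B = c * Tc 0 d A B"
  proof (cases "d < card A \<or> d < card B")
    case True
    have "Tc p q A B = coeff (Syl p q A B) d" using coeff_Syl(1)[OF fA fB, of p q] by (simp add: d_def)
    also have "\<dots> = c * coeff (Syl 0 d A B) d" unfolding P[OF True] by simp
    also have "coeff (Syl 0 d A B) d = Tc 0 d A B" using coeff_Syl(1)[OF fA fB, of 0 d] by simp
    finally show ?thesis .
  next
    case False
    hence cA: "card A = d" and cB: "card B = d" using dA dB by (auto simp: d_def)
    show ?thesis
    proof (cases "p = 0")
      case True thus ?thesis by (simp add: c_def d_def)
    next
      case p0: False
      show ?thesis
      proof (cases "q = 0")
        case True
        hence "Tc p q A B = 1" using Tc_full_0[OF fA fB] cA by (simp add: d_def)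
        moreover have "Tc 0 d A B = 1" using Tc_0_full[OF fA fB] cB by simp
        ultimately show ?thesis using True cA by (simp add: c_def d_def)
      next
        case q0: False
        have p1: "1 \<le> p" and q1: "1 \<le> q" using p0 q0 by auto
        have "A \<noteq> {}" using cA p1 d_def by auto
        then obtain a0 where a0: "a0 \<in> A" by blast
        define A0 where "A0 = A - {a0}"
        have fA0: "finite A0" using fA by (simp add: A0_def)
        have a0A0: "a0 \<notin> A0" by (simp add: A0_def)
        have AA: "A = insert a0 A0" using a0 by (auto simp: A0_def)
        have cA0: "card A0 = d - 1" using cA a0 fA by (simp add: A0_def card_Diff_singleton)
        have lt: "card A0 + card B < card A + card B" using cA0 cA p1 d_def by simp
        have IH1: "Syl (p - 1) q A0 B = smult (of_nat ((p - 1 + q) choose (p - 1))) (Syl 0 (d - 1) A0 B)"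
          using less.hyps[OF lt fA0 fB, of "p - 1" q] cA0 cB p1 by (simp add: d_def)
        have IH2: "Syl (q - 1) p A0 B = smult (of_nat ((q - 1 + p) choose (q - 1))) (Syl 0 (d - 1) A0 B)"
          using less.hyps[OF lt fA0 fB, of "q - 1" p] cA0 cB q1 by (simp add: d_def add.commute)
        have S0: "Syl 0 (d - 1) A0 B = Rx A0"
          by (rule Syl0_eq_Rx[OF fA0 fB cA0]) (use cB p1 d_def in simp)
        define R where "R = (\<Prod>a\<in>A0. a0 - a)"
        have R0: "R \<noteq> 0" using a0A0 fA0 by (auto simp: R_def prod_zero_iff)
        have "Tc p q A B * R = poly (Syl (p - 1) q A0 B) a0 + poly (Syl (q - 1) p A0 B) a0"
          unfolding AA R_def by (rule REC[OF fA0 fB a0A0 p1 q1]) (use cA0 cB p1 d_def in simp_all)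
        also have "\<dots> = (of_nat ((p - 1 + q) choose (p - 1)) + of_nat ((q - 1 + p) choose (q - 1))) * R"
          unfolding IH1 IH2 S0 by (simp add: poly_Rx R_def algebra_simps)
        also have "\<dots> = of_nat (d choose p) * R"
          using binom_pascal_aux[OF p1 q1] by (simp add: d_def flip: of_nat_add)
        finally have "Tc p q A B = of_nat (d choose p)" using R0 by simp
        moreover have "Tc 0 d A B = 1" using Tc_0_full[OF fA fB] cB by simp
        ultimately show ?thesis using cA by (simp add: c_def)
      qed
    qed
  qed
  show ?case using C P by (simp add: c_def d_def)
qed

definition hrow :: "nat \<Rightarrow> nat \<Rightarrow> nat \<Rightarrow> 'a::comm_ring_1 poly \<Rightarrow> 'a poly \<Rightarrow> nat \<Rightarrow> 'a poly" where
  "hrow n d m f g r = (if r < n - d then monom 1 (n - d - 1 - r) * f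
     else monom 1 (m - d - 1 - (r - (n - d))) * g)"

lemma Sres_mat_alt: "Sres_mat d f g = mat (degree f + degree g - 2 * d) (degree f + degree g - 2 * d)
  (\<lambda>(r, c). if c < degree f + degree g - 2 * d - 1
     then [: coeff (hrow (degree g) d (degree f) f g r) (degree f + degree g - d - 1 - c) :]
     else hrow (degree g) d (degree f) f g r)"
  unfolding Sres_mat_def hrow_def Let_def ..

lemma coeff_monom1_mult_int: "coeff (monom 1 k * (F::'a::comm_ring_1 poly)) i = coeff_int F (int i - int k)"
  by (auto simp: coeff_monom_mult coeff_int_def nat_diff_distrib)

lemma Sres_eq_subresultant:
  assumes "d \<le> degree f" "d < degree g"
  shows "Sres_mat d f g = transpose_mat (subresultant_mat d f g)"
proof -
  define m n where "m = degree f" "n = degree g"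
  define N where "N = m + n - 2 * d"
  have N: "N = (m - d) + (n - d)" using assms by (simp add: N_def m_n_def)
  show ?thesis
  proof (rule eq_matI)
    show "dim_row (Sres_mat d f g) = dim_row (transpose_mat (subresultant_mat d f g))"
      "dim_col (Sres_mat d f g) = dim_col (transpose_mat (subresultant_mat d f g))"
      unfolding Sres_mat_alt using N by (simp_all add: m_n_def N_def)
    fix r c assume r: "r < dim_row (transpose_mat (subresultant_mat d f g))"
      and c: "c < dim_col (transpose_mat (subresultant_mat d f g))"
    hence r': "r < N" and c': "c < N" using N by (auto simp: m_n_def)
    have idx: "transpose_mat (subresultant_mat d f g) $$ (r, c) = subresultant_mat d f g $$ (c, r)"
      using r c by simp
    have L: "Sres_mat d f g $$ (r, c) = (if c < N - 1
     then [: coeff (hrow n d m f g r) (m + n - d - 1 - c) :] else hrow n d m f g r)"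
      unfolding Sres_mat_alt using r' c' by (simp add: m_n_def N_def)
    have R: "subresultant_mat d f g $$ (c, r) = (if r < n - d then
       if c = N - 1 then monom 1 (n - d - 1 - r) * f else [: coeff_int f (int m - int c + int r) :]
      else if c = N - 1 then monom 1 (m - d - 1 - (r - (n - d))) * g
       else [: coeff_int g (int n - int c + int (r - (n - d))) :])"
      unfolding subresultant_index_mat[OF c'[unfolded N m_n_def] r'[unfolded N m_n_def]]
      using N by (simp add: m_n_def Let_def)
    have main: "(if c < N - 1 then [: coeff (hrow n d m f g r) (m + n - d - 1 - c) :] else hrow n d m f g r) =
      (if r < n - d then
       if c = N - 1 then monom 1 (n - d - 1 - r) * f else [: coeff_int f (int m - int c + int r) :]
      else if c = N - 1 then monom 1 (m - d - 1 - (r - (n - d))) * g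
       else [: coeff_int g (int n - int c + int (r - (n - d))) :])"
    proof (cases "r < n - d"; cases "c < N - 1")
      assume a: "r < n - d" "c < N - 1"
      have cn: "c \<noteq> N - 1" using a by simp
      have le1: "d + 1 + c \<le> m + n" using a N by linarith
      have le2: "d + 1 + r \<le> n" using a by linarith
      have e1: "int (m + n - d - 1 - c) = int m + int n - int d - 1 - int c"
        using le1 by (simp add: diff_diff_left of_nat_diff)
      have e2: "int (n - d - 1 - r) = int n - int d - 1 - int r"
        using le2 by (simp add: diff_diff_left of_nat_diff)
      have "int (m + n - d - 1 - c) - int (n - d - 1 - r) = int m - int c + int r"
        unfolding e1 e2 by simp
      hence "coeff (monom 1 (n - d - 1 - r) * f) (m + n - d - 1 - c) = coeff_int f (int m - int c + int r)"
        by (simp only: coeff_monom1_mult_int)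
      thus ?thesis by (simp only: hrow_def if_P[OF a(1)] if_P[OF a(2)] if_not_P[OF cn])
    next
      assume a: "\<not> r < n - d" "c < N - 1"
      have cn: "c \<noteq> N - 1" using a by simp
      have le1: "d + 1 + c \<le> m + n" using a N by linarith
      have le3: "d + 1 + (r - (n - d)) \<le> m" using a N r' by linarith
      have e1: "int (m + n - d - 1 - c) = int m + int n - int d - 1 - int c"
        using le1 by (simp add: diff_diff_left of_nat_diff)
      have e4: "int (m - d - 1 - (r - (n - d))) = int m - int d - 1 - int (r - (n - d))"
        using le3 by (simp add: diff_diff_left of_nat_diff)
      have "int (m + n - d - 1 - c) - int (m - d - 1 - (r - (n - d))) = int n - int c + int (r - (n - d))"
        unfolding e1 e4 by simp
      hence "coeff (monom 1 (m - d - 1 - (r - (n - d))) * g) (m + n - d - 1 - c) =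
          coeff_int g (int n - int c + int (r - (n - d)))"
        by (simp only: coeff_monom1_mult_int)
      thus ?thesis by (simp only: hrow_def if_not_P[OF a(1)] if_P[OF a(2)] if_not_P[OF cn])
    next
      assume a: "r < n - d" "\<not> c < N - 1"
      hence cn: "c = N - 1" using c' by simp
      show ?thesis by (simp only: hrow_def if_P[OF a(1)] if_not_P[OF a(2)] if_P[OF cn])
    next
      assume a: "\<not> r < n - d" "\<not> c < N - 1"
      hence cn: "c = N - 1" using c' by simp
      show ?thesis by (simp only: hrow_def if_not_P[OF a(1)] if_not_P[OF a(2)] if_P[OF cn])
    qed
    show "Sres_mat d f g $$ (r, c) = transpose_mat (subresultant_mat d f g) $$ (r, c)"
      unfolding idx L R by (rule main)
  qed
qed

lemma Sres_subresultant:
  assumes "d \<le> degree f" "d < degree g"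
  shows "Sres d f g = subresultant d f g"
  unfolding Sres_def subresultant_def Sres_eq_subresultant[OF assms]
  by (rule det_transpose) (auto simp: subresultant_mat_def Let_def)

lemma Sres_degree:
  assumes "d \<le> degree f" "d < degree g"
  shows "degree (Sres d f g) \<le> d"
proof (rule degree_le)
  show "\<forall>k>d. coeff (Sres d f g) k = 0"
  proof (intro allI impI)
    fix k assume k: "d < k"
    have "coeff (subresultant d f g) k = 0"
    proof (cases "k < degree f + (degree g - d)")
      case True thus ?thesis using subresultant_zero_lt[OF True] assms k by simp
    next
      case False thus ?thesis using subresultant_zero_ge[of f g d k] assms by simp
    qed
    thus "coeff (Sres d f g) k = 0" unfolding Sres_subresultant[OF assms] .
  qed
qed

definition CM :: "nat \<Rightarrow> nat \<Rightarrow> (nat \<Rightarrow> 'a::zero poly) \<Rightarrow> 'a mat" where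
  "CM N t H = mat N N (\<lambda>(r, c). coeff (H r) (t - c))"

lemma coeff_Sres_d:
  assumes dm: "d \<le> degree f" and dn: "d < degree g"
  shows "coeff (Sres d f g) d = det (CM (degree f + degree g - 2 * d) (degree f + degree g - d - 1)
     (hrow (degree g) d (degree f) f g))"
proof -
  define m n where "m = degree f" "n = degree g"
  define N where "N = m + n - 2 * d"
  have N: "N = (m - d) + (n - d)" using dm dn by (simp add: N_def m_n_def)
  have eq: "CM N (m + n - d - 1) (hrow n d m f g) = transpose_mat (subresultant'_mat d d f g)"
  proof (rule eq_matI)
    show "dim_row (CM N (m + n - d - 1) (hrow n d m f g)) = dim_row (transpose_mat (subresultant'_mat d d f g))"
      "dim_col (CM N (m + n - d - 1) (hrow n d m f g)) = dim_col (transpose_mat (subresultant'_mat d d f g))"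
      unfolding CM_def subresultant'_mat_def Let_def using N by (simp_all add: m_n_def)
    fix r c assume r: "r < dim_row (transpose_mat (subresultant'_mat d d f g))"
      and c: "c < dim_col (transpose_mat (subresultant'_mat d d f g))"
    hence r': "r < N" and c': "c < N" using N by (auto simp: m_n_def subresultant'_mat_def Let_def)
    have L: "CM N (m + n - d - 1) (hrow n d m f g) $$ (r, c) = coeff (hrow n d m f g r) (m + n - d - 1 - c)"
      unfolding CM_def using r' c' by simp
    have R: "transpose_mat (subresultant'_mat d d f g) $$ (r, c) = (if r < n - d then
       if c = N - 1 then coeff_int f (int d - int (n - d - 1) + int r) else coeff_int f (int m - int c + int r)
      else if c = N - 1 then coeff_int g (int d - int (m - d - 1) + int (r - (n - d)))
       else coeff_int g (int n - int c + int (r - (n - d))))"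
      using r c r' c' N unfolding subresultant'_mat_def Let_def by (simp add: m_n_def)
    have le1: "d + 1 + c \<le> m + n" using c' N by linarith
    have e1: "int (m + n - d - 1 - c) = int m + int n - int d - 1 - int c"
      using le1 by (simp add: diff_diff_left of_nat_diff)
    show "CM N (m + n - d - 1) (hrow n d m f g) $$ (r, c) = transpose_mat (subresultant'_mat d d f g) $$ (r, c)"
    proof (cases "r < n - d")
      case a: True
      have le2: "d + 1 + r \<le> n" using a by linarith
      have e2: "int (n - d - 1 - r) = int n - int d - 1 - int r"
        using le2 by (simp add: diff_diff_left of_nat_diff)
      have h: "hrow n d m f g r = monom 1 (n - d - 1 - r) * f" using a by (simp add: hrow_def)
      show ?thesis
      proof (cases "c = N - 1")
        case True
        have "int (m + n - d - 1 - c) - int (n - d - 1 - r) = int d - int (n - d - 1) + int r"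
          unfolding e1 e2 True using N dm dn le2 by (simp add: m_n_def of_nat_diff)
        hence "coeff (hrow n d m f g r) (m + n - d - 1 - c) = coeff_int f (int d - int (n - d - 1) + int r)"
          by (simp only: h coeff_monom1_mult_int)
        thus ?thesis unfolding L R using a True by simp
      next
        case False
        have "int (m + n - d - 1 - c) - int (n - d - 1 - r) = int m - int c + int r"
          unfolding e1 e2 by simp
        hence "coeff (hrow n d m f g r) (m + n - d - 1 - c) = coeff_int f (int m - int c + int r)"
          by (simp only: h coeff_monom1_mult_int)
        thus ?thesis unfolding L R using a False by simp
      qed
    next
      case a: False
      have le3: "d + 1 + (r - (n - d)) \<le> m" using a N r' by linarith
      have e4: "int (m - d - 1 - (r - (n - d))) = int m - int d - 1 - int (r - (n - d))"
        using le3 by (simp add: diff_diff_left of_nat_diff)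
      have h: "hrow n d m f g r = monom 1 (m - d - 1 - (r - (n - d))) * g" using a by (simp add: hrow_def)
      show ?thesis
      proof (cases "c = N - 1")
        case True
        have "int (m + n - d - 1 - c) - int (m - d - 1 - (r - (n - d))) = int d - int (m - d - 1) + int (r - (n - d))"
          unfolding e1 e4 True using N dm dn le3 by (simp add: m_n_def of_nat_diff)
        hence "coeff (hrow n d m f g r) (m + n - d - 1 - c) = coeff_int g (int d - int (m - d - 1) + int (r - (n - d)))"
          by (simp only: h coeff_monom1_mult_int)
        thus ?thesis unfolding L R using a True by simp
      next
        case False
        have "int (m + n - d - 1 - c) - int (m - d - 1 - (r - (n - d))) = int n - int c + int (r - (n - d))"
          unfolding e1 e4 by simp
        hence "coeff (hrow n d m f g r) (m + n - d - 1 - c) = coeff_int g (int n - int c + int (r - (n - d)))"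
          by (simp only: h coeff_monom1_mult_int)
        thus ?thesis unfolding L R using a False by simp
      qed
    qed
  qed
  have "coeff (Sres d f g) d = det (subresultant'_mat d d f g)"
    unfolding Sres_subresultant[OF dm dn] coeff_subresultant using dn by simp
  also have "\<dots> = det (transpose_mat (subresultant'_mat d d f g))"
    by (rule det_transpose[symmetric]) (auto simp: subresultant'_mat_def Let_def)
  finally show ?thesis unfolding eq[symmetric] by (simp add: m_n_def N_def)
qed

lemma coeff_Sres_d_base:
  assumes dm: "d = degree f" and dn: "d < degree g" and lc: "coeff f d = 1"
  shows "coeff (Sres d f g) d = 1"
proof -
  define n where "n = degree g"
  have "coeff (Sres d f g) d = det (CM (n - d) (n - 1) (hrow n d d f g))"
    using coeff_Sres_d[of d f g] dm dn by (simp add: n_def)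
  also have "\<dots> = 1"
  proof -
    let ?M = "CM (n - d) (n - 1) (hrow n d d f g)"
    have ent: "?M $$ (r, c) = coeff_int f (int d - int c + int r)" if "r < n - d" "c < n - d" for r c
    proof -
      have eqi: "int (n - 1 - c) - int (n - d - 1 - r) = int d - int c + int r" using that by linarith
      have "?M $$ (r, c) = coeff (hrow n d d f g r) (n - 1 - c)" using that by (simp add: CM_def)
      also have "\<dots> = coeff (monom 1 (n - d - 1 - r) * f) (n - 1 - c)" using that by (simp add: hrow_def)
      also have "\<dots> = coeff_int f (int d - int c + int r)" unfolding coeff_monom1_mult_int eqi ..
      finally show ?thesis .
    qed
    have ut: "upper_triangular ?M"
      unfolding upper_triangular_def
    proof (intro allI impI)
      fix i j assume i: "i < dim_row ?M" and j: "j < i"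
      have "i < n - d" using i by (simp add: CM_def)
      hence "?M $$ (i, j) = coeff_int f (int d - int j + int i)" using j by (intro ent) auto
      also have "\<dots> = 0" unfolding coeff_int_def using j dm by (auto intro!: coeff_eq_0)
      finally show "?M $$ (i, j) = 0" .
    qed
    have "det ?M = prod_list (diag_mat ?M)"
      by (rule det_upper_triangular[OF ut, of "n - d"]) (simp add: CM_def)
    also have "\<dots> = 1" unfolding prod_list_diag_prod
    proof (rule prod.neutral, intro ballI)
      fix i assume "i \<in> {0..<dim_row ?M}" hence "i < n - d" by (simp add: CM_def)
      thus "?M $$ (i, i) = 1" using ent[of i i] lc by (simp add: coeff_int_def)
    qed
    finally show ?thesis .
  qed
  finally show ?thesis .
qed

lemma mat_mult_entry:
  "r < N \<Longrightarrow> c < N \<Longrightarrow> (mat N N fA * mat N N fB) $$ (r, c) = (\<Sum>i<N. fA (r, i) * fB (i, c))"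
  by (simp add: scalar_prod_def lessThan_atLeast0 row_def col_def)

lemma synth_rec: "coeff (synthetic_div (p::'a::field poly) a) n = coeff p (Suc n) + a * coeff (synthetic_div p a) (Suc n)"
  using arg_cong[OF synthetic_div_correct[of p a], of "\<lambda>q. coeff q (Suc n)"] by simp

lemma synth_coeff:
  fixes p :: "'a::field poly"
  assumes "degree p \<le> t" "c < t"
  shows "coeff (synthetic_div p a) (t - 1 - c) = (\<Sum>i\<le>c. coeff p (t - i) * a ^ (c - i))"
  using assms(2)
proof (induction c)
  case 0
  have "coeff (synthetic_div p a) t = 0"
    using assms(1) 0 by (intro coeff_eq_0) (simp add: degree_synthetic_div)
  moreover have "Suc (t - 1) = t" using 0 by simp
  ultimately show ?case using synth_rec[of p a "t - 1"] by simp
next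
  case (Suc c)
  have e: "Suc (t - 1 - Suc c) = t - 1 - c" "t - 1 - c = t - Suc c + 0 + 0" using Suc by auto
  have "coeff (synthetic_div p a) (t - 1 - Suc c) =
     coeff p (t - 1 - c) + a * coeff (synthetic_div p a) (t - 1 - c)"
    using synth_rec[of p a "t - 1 - Suc c"] e(1) by simp
  also have "coeff (synthetic_div p a) (t - 1 - c) = (\<Sum>i\<le>c. coeff p (t - i) * a ^ (c - i))"
    using Suc by simp
  also have "coeff p (t - 1 - c) + a * (\<Sum>i\<le>c. coeff p (t - i) * a ^ (c - i)) =
     (\<Sum>i\<le>c. coeff p (t - i) * a ^ (Suc c - i)) + coeff p (t - Suc c) * a ^ (Suc c - Suc c)"
    by (simp add: sum_distrib_left Suc_diff_le ac_simps)
  also have "\<dots> = (\<Sum>i\<le>Suc c. coeff p (t - i) * a ^ (Suc c - i))" by simp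
  finally show ?case .
qed

lemma synth_lin: "synthetic_div ([:-a, 1:] * p) a = (p::'a::field poly)"
proof -
  have "[:-a, 1:] * p + smult a p = pCons 0 p" by (simp add: mult_pCons_left smult_minus_left)
  from synthetic_div_unique[OF this] show ?thesis by simp
qed

lemma synth_shift: "synthetic_div (monom 1 (Suc j) * (g::'a::field poly)) a = monom 1 j * g + smult a (synthetic_div (monom 1 j * g) a)"
proof -
  have "monom 1 (Suc j) * g = pCons 0 (monom 1 j * g)"
    by (simp add: monom_Suc mult_pCons_left)
  thus ?thesis using synthetic_div_correct[of "monom 1 j * g" a] by (simp add: synthetic_div_pCons)
qed

lemma det_ut_one:
  assumes "upper_triangular (A :: 'a::comm_ring_1 mat)" "A \<in> carrier_mat N N" "\<And>i. i < N \<Longrightarrow> A $$ (i, i) = 1"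
  shows "det A = 1"
proof -
  have "det A = prod_list (diag_mat A)" by (rule det_upper_triangular[OF assms(1,2)])
  also have "\<dots> = 1" unfolding prod_list_diag_prod using assms(2,3) by (intro prod.neutral) auto
  finally show ?thesis .
qed

lemma Sres_eval_root:
  fixes f1 g :: "'a::field poly"
  assumes f1: "f1 \<noteq> 0" and dm: "d \<le> degree f1" and dn: "d < degree g"
  shows "poly (Sres d ([:-a, 1:] * f1) g) a = poly g a * coeff (Sres d f1 g) d"
proof -
  define f where "f = [:-a, 1:] * f1"
  define m where "m = degree f"
  define n where "n = degree g"
  have m: "m = degree f1 + 1" unfolding m_def f_def using f1 by (subst degree_mult_eq) auto
  define N where "N = m + n - 2 * d"
  define top where "top = m + n - d - 1"
  have N2: "2 \<le> N" using m dm dn by (simp add: N_def n_def)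
  have Ntop: "N - 1 \<le> top" by (simp add: N_def top_def)
  have nN: "n - d \<le> N - 1" using m dm dn by (simp add: N_def n_def)
  have Nexp: "N = (m - d) + (n - d)" using m dm dn by (simp add: N_def n_def)
  define H where "H = hrow n d m f g"
  define H1 where "H1 = hrow n d (m - 1) f1 g"
  define E where "E = mat N N (\<lambda>(r,c). if c < N - 1 then coeff (H r) (top - c) else poly (H r) a)"
  have E_eq: "map_mat (\<lambda>p. poly p a) (Sres_mat d f g) = E"
    unfolding Sres_mat_alt E_def H_def N_def top_def m_def n_def by (rule eq_matI) auto
  have crh: "comm_ring_hom (\<lambda>p. poly p a)" by unfold_locales auto
  have detE: "poly (Sres d f g) a = det E"
    unfolding Sres_def E_eq[symmetric] by (rule comm_ring_hom.hom_det[OF crh, symmetric])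
  have degH: "degree (H r) \<le> top" if r: "r < N" for r
  proof (cases "r < n - d")
    case True
    have "degree (H r) \<le> (n - d - 1 - r) + m"
      unfolding H_def hrow_def using True degree_mult_le[of "monom 1 (n - d - 1 - r)" f]
      by (simp add: degree_monom_eq m_def)
    also have "\<dots> \<le> top" using True by (simp add: top_def)
    finally show ?thesis .
  next
    case False
    have "degree (H r) \<le> (m - d - 1 - (r - (n - d))) + n"
      unfolding H_def hrow_def using False degree_mult_le[of "monom 1 (m - d - 1 - (r - (n - d)))" g]
      by (simp add: degree_monom_eq n_def)
    also have "\<dots> \<le> top" using False r Nexp by (simp add: top_def)
    finally show ?thesis .
  qed
  define U where "U = mat N N (\<lambda>(i,c). if c < N - 1 then (if i \<le> c then a ^ (c - i) else 0)
     else (if i = N - 1 then 1 else 0))"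
  define X where "X = mat N N (\<lambda>(r,c). if c < N - 1 then coeff (synthetic_div (H r) a) (top - 1 - c)
     else poly (H r) a)"
  have EU: "E * U = X"
  proof (rule eq_matI)
    fix r c assume r: "r < dim_row X" and c: "c < dim_col X"
    hence r': "r < N" and c': "c < N" by (auto simp: X_def)
    have "(E * U) $$ (r, c) = (\<Sum>i<N. (if i < N - 1 then coeff (H r) (top - i) else poly (H r) a) *
       (if c < N - 1 then (if i \<le> c then a ^ (c - i) else 0) else (if i = N - 1 then 1 else 0)))"
      unfolding E_def U_def by (subst mat_mult_entry[OF r' c']) simp
    also have "\<dots> = X $$ (r, c)"
    proof (cases "c < N - 1")
      case True
      have "(\<Sum>i<N. (if i < N - 1 then coeff (H r) (top - i) else poly (H r) a) *
         (if c < N - 1 then (if i \<le> c then a ^ (c - i) else 0) else (if i = N - 1 then 1 else 0))) =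
         (\<Sum>i<N. if i \<in> {..c} then coeff (H r) (top - i) * a ^ (c - i) else 0)"
        using True by (intro sum.cong refl) auto
      also have "\<dots> = (\<Sum>i\<in>{..<N} \<inter> {..c}. coeff (H r) (top - i) * a ^ (c - i))"
        by (rule sum.inter_restrict[symmetric]) simp
      also have "{..<N} \<inter> {..c} = {..c}" using True by auto
      also have "(\<Sum>i\<le>c. coeff (H r) (top - i) * a ^ (c - i)) = coeff (synthetic_div (H r) a) (top - 1 - c)"
        by (rule synth_coeff[symmetric]) (use degH[OF r'] True Ntop in auto)
      finally show ?thesis unfolding X_def using r' c' True by simp
    next
      case False
      hence cN: "c = N - 1" using c' by simp
      have "(\<Sum>i<N. (if i < N - 1 then coeff (H r) (top - i) else poly (H r) a) *
         (if c < N - 1 then (if i \<le> c then a ^ (c - i) else 0) else (if i = N - 1 then 1 else 0))) =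
         (\<Sum>i<N. if i = N - 1 then poly (H r) a else 0)"
        using False by (intro sum.cong refl) auto
      also have "\<dots> = poly (H r) a" using N2 by (simp add: sum.delta)
      finally show ?thesis unfolding X_def using r' c' False by simp
    qed
    finally show "(E * U) $$ (r, c) = X $$ (r, c)" .
  qed (auto simp: E_def U_def X_def)
  define L where "L = mat N N (\<lambda>(r,i). (if i = r then 1 else 0) + (if i = Suc r \<and> n - d \<le> r then - a else 0))"
  define T where "T = mat N N (\<lambda>(r,c). if c = N - 1 then (if r = N - 1 then poly g a else 0)
     else if r = N - 1 then coeff (synthetic_div g a) (top - 1 - c) else coeff (H1 r) (top - 1 - c))"
  have LX: "L * X = T"
  proof (rule eq_matI)
    fix r c assume r: "r < dim_row T" and c: "c < dim_col T"
    hence r': "r < N" and c': "c < N" by (auto simp: T_def)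
    define Xf where "Xf = (\<lambda>(r,c). if c < N - 1 then coeff (synthetic_div (H r) a) (top - 1 - c) else poly (H r) a)"
    have "(L * X) $$ (r, c) = (\<Sum>i<N. ((if i = r then 1 else 0) + (if i = Suc r \<and> n - d \<le> r then - a else 0)) * Xf (i, c))"
      unfolding L_def X_def Xf_def by (subst mat_mult_entry[OF r' c']) simp
    also have "\<dots> = (\<Sum>i<N. (if i = r then Xf (i, c) else 0)) +
        (\<Sum>i<N. (if i = Suc r then (if n - d \<le> r then - a * Xf (i, c) else 0) else 0))"
      by (subst sum.distrib[symmetric]) (intro sum.cong refl, auto)
    also have "\<dots> = Xf (r, c) + (if Suc r < N \<and> n - d \<le> r then - a * Xf (Suc r, c) else 0)"
      using r' by (simp add: sum.delta)
    also have "\<dots> = T $$ (r, c)"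
    proof -
      have Tv: "T $$ (r, c) = (if c = N - 1 then (if r = N - 1 then poly g a else 0)
        else if r = N - 1 then coeff (synthetic_div g a) (top - 1 - c) else coeff (H1 r) (top - 1 - c))"
        unfolding T_def using r' c' by simp
      show ?thesis
      proof (cases "r < n - d")
        case True
        have rN: "r \<noteq> N - 1" using True nN by simp
        have "H r = monom 1 (n - d - 1 - r) * ([:-a, 1:] * f1)"
          by (simp only: H_def hrow_def f_def if_P[OF True])
        hence Hr: "H r = [:-a, 1:] * (monom 1 (n - d - 1 - r) * f1)"
          by (simp only: mult.left_commute)
        have H1r: "H1 r = monom 1 (n - d - 1 - r) * f1" unfolding H1_def hrow_def using True by simp
        have sd: "synthetic_div (H r) a = H1 r" by (simp only: Hr H1r synth_lin)
        have p0: "poly (H r) a = 0" by (simp add: Hr)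
        show ?thesis unfolding Tv Xf_def using True rN c'
          by (cases "c = N - 1") (auto simp: sd p0)
      next
        case False
        show ?thesis
        proof (cases "r = N - 1")
          case True
          have j0: "m - d - 1 - (r - (n - d)) = 0" using True Nexp by simp
          have Hr: "H r = g" unfolding H_def hrow_def using False j0 by simp
          have HN: "H (N - Suc 0) = g" using Hr True by simp
          show ?thesis unfolding Tv Xf_def using True N2 c'
            by (cases "c = N - 1") (auto simp: HN)
        next
          case rN: False
          define j where "j = m - d - 1 - (Suc r - (n - d))"
          obtain s where s: "r = (n - d) + s" using False by (metis le_add_diff_inverse not_less)
          obtain M where M: "M = m - d" by simp
          have sM: "s < M" "s \<noteq> M - 1" using rN r' Nexp s M by auto
          have j: "m - d - 1 - (r - (n - d)) = Suc j"
            unfolding j_def s M[symmetric] using sM by simp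
          have Hr: "H r = monom 1 (Suc j) * g" unfolding H_def hrow_def using False j by simp
          have Hr1: "H (Suc r) = monom 1 j * g" unfolding H_def hrow_def j_def using False by simp
          have j1: "m - 1 - d - 1 - (r - (n - d)) = j" using j unfolding s by linarith
          have H1r: "H1 r = monom 1 j * g" unfolding H1_def hrow_def using False j1 by simp
          have sr: "Suc r < N" using rN r' by simp
          show ?thesis
          proof (cases "c = N - 1")
            case True
            thus ?thesis unfolding Tv Xf_def using rN sr False N2
              by (simp add: Hr Hr1 poly_monom)
          next
            case cN: False
            hence "c < N - 1" using c' by simp
            thus ?thesis unfolding Tv Xf_def using rN sr False cN
              by (simp add: Hr Hr1 H1r synth_shift)
          qed
        qed
      qed
    qed
    finally show "(L * X) $$ (r, c) = T $$ (r, c)" .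
  qed (auto simp: L_def X_def T_def)
  have carr: "E \<in> carrier_mat N N" "U \<in> carrier_mat N N" "L \<in> carrier_mat N N"
    by (auto simp: E_def U_def L_def)
  have detU: "det U = 1"
  proof (rule det_ut_one[OF _ carr(2)])
    show "upper_triangular U" unfolding upper_triangular_def U_def by auto
    show "U $$ (i, i) = 1" if "i < N" for i using that by (auto simp: U_def)
  qed
  have detL: "det L = 1"
  proof (rule det_ut_one[OF _ carr(3)])
    show "upper_triangular L" unfolding upper_triangular_def L_def by auto
    show "L $$ (i, i) = 1" if "i < N" for i using that by (auto simp: L_def)
  qed
  have "det T = det L * (det E * det U)"
    unfolding LX[symmetric] EU[symmetric]
    by (subst det_mult[OF carr(3)]) (auto simp: det_mult[OF carr(1) carr(2)] intro: mult_carrier_mat[OF carr(1,2)])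
  hence detET: "det E = det T" using detU detL by simp
  have Tc: "T \<in> carrier_mat N N" by (simp add: T_def)
  have "det T = (\<Sum>i<N. T $$ (i, N - 1) * cofactor T i (N - 1))"
    by (rule laplace_expansion_column[OF Tc]) (use N2 in simp)
  also have "\<dots> = (\<Sum>i<N. if i = N - 1 then poly g a * cofactor T i (N - 1) else 0)"
    by (intro sum.cong refl) (auto simp: T_def)
  also have "\<dots> = poly g a * cofactor T (N - 1) (N - 1)" using N2 by (simp add: sum.delta)
  also have "cofactor T (N - 1) (N - 1) = det (CM (N - 1) (top - 1) H1)"
  proof -
    have "mat_delete T (N - 1) (N - 1) = CM (N - 1) (top - 1) H1"
      by (rule eq_matI) (auto simp: mat_delete_def T_def CM_def)
    thus ?thesis unfolding cofactor_def by simp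
  qed
  finally have detT: "det T = poly g a * det (CM (N - 1) (top - 1) H1)" .
  have "coeff (Sres d f1 g) d = det (CM (degree f1 + degree g - 2 * d) (degree f1 + degree g - d - 1)
     (hrow (degree g) d (degree f1) f1 g))"
    by (rule coeff_Sres_d[OF dm dn])
  also have "\<dots> = det (CM (N - 1) (top - 1) H1)"
    unfolding H1_def N_def top_def n_def m using dm dn by (simp add: numeral_2_eq_2)
  finally have cS: "coeff (Sres d f1 g) d = det (CM (N - 1) (top - 1) H1)" .
  show ?thesis unfolding f_def[symmetric] detE detET detT cS ..
qed

lemma Rx_remove: "finite A \<Longrightarrow> a \<in> A \<Longrightarrow> Rx A = [:-a, 1:] * Rx (A - {a})"
  unfolding Rx_def by (rule prod.remove)

lemma Sres_Syl0:
  fixes A B :: "'a::field set"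
  assumes "finite A" "finite B" "d < card A" "d < card B"
  shows "Sres d (Rx A) (Rx B) = Syl 0 d A B"
  using assms
proof (induction "card A" arbitrary: A rule: less_induct)
  case less
  note fA = less.prems(1) and fB = less.prems(2) and dA = less.prems(3) and dB = less.prems(4)
  have degA: "degree (Rx A) = card A" and degB: "degree (Rx B) = card B"
    using Rx_monic[OF fA] Rx_monic[OF fB] by auto
  show ?case
  proof (rule poly_eq_on_set[where d = d and S = A])
    show "degree (Sres d (Rx A) (Rx B)) \<le> d"
      by (rule Sres_degree) (use degA degB dA dB in auto)
    show "degree (Syl 0 d A B) \<le> d" using coeff_Syl(2)[OF fA fB, of 0 d] by simp
    show "finite A" "d < card A" by fact+
    show "\<forall>a\<in>A. poly (Sres d (Rx A) (Rx B)) a = poly (Syl 0 d A B) a"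
    proof
      fix a assume a: "a \<in> A"
      define A1 where "A1 = A - {a}"
      have fA1: "finite A1" using fA by (simp add: A1_def)
      have cA1: "card A1 = card A - 1" using fA a by (simp add: A1_def card_Diff_singleton)
      have degA1: "degree (Rx A1) = card A1" using Rx_monic[OF fA1] by simp
      have "poly (Sres d (Rx A) (Rx B)) a = poly (Sres d ([:-a, 1:] * Rx A1) (Rx B)) a"
        using Rx_remove[OF fA a] by (simp add: A1_def)
      also have "\<dots> = poly (Rx B) a * coeff (Sres d (Rx A1) (Rx B)) d"
        by (rule Sres_eval_root) (use degA1 cA1 dA degB dB in auto)
      also have "coeff (Sres d (Rx A1) (Rx B)) d = Tc 0 d A1 B"
      proof (cases "d < card A1")
        case True
        have lt: "card A1 < card A" using cA1 dA by simp
        have "Sres d (Rx A1) (Rx B) = Syl 0 d A1 B" by (rule less.hyps[OF lt fA1 fB True dB])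
        thus ?thesis using coeff_Syl(1)[OF fA1 fB, of 0 d] by simp
      next
        case False
        hence c: "card A1 = d" using cA1 dA by simp
        have "coeff (Sres d (Rx A1) (Rx B)) d = 1"
          by (rule coeff_Sres_d_base) (use degA1 c degB dB Rx_monic[OF fA1] in auto)
        moreover have "Tc 0 d A1 B = 1" using Tc0_small[OF fA1 fB _ dB] c by simp
        ultimately show ?thesis by simp
      qed
      also have "poly (Rx B) a * Tc 0 d A1 B = poly (Syl 0 d A B) a"
        using poly_Syl_in_A[OF fA fB a, of 0 d] by (simp add: poly_Rx A1_def)
      finally show "poly (Sres d (Rx A) (Rx B)) a = poly (Syl 0 d A B) a" .
    qed
  qed
qed

theorem corollary3p4:
  fixes A B :: "'a::field set" and m n p q d :: nat and f g :: "'a poly"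
  assumes "finite A" and "finite B" and "card A = m" and "card B = n"
    and "f = (\<Prod>a\<in>A. [:- a, 1:])" and "g = (\<Prod>b\<in>B. [:- b, 1:])"
    and "p \<le> m" and "q \<le> n" and "d = p + q"
    and "d + 1 \<le> min m n"
  shows "Syl p q A B = smult ((-1) ^ (p * (m - d)) * of_nat (d choose p)) (Sres d f g)"
proof -
  have f: "f = Rx A" and g: "g = Rx B" using assms(5,6) by (simp_all add: Rx_def)
  have dA: "d < card A" and dB: "d < card B" using assms(3,4,10) by auto
  have "Syl p q A B = smult ((-1)^(p * (card A - (p + q))) * of_nat ((p + q) choose p)) (Syl 0 (p + q) A B)"
    using main_PC[OF assms(1,2), of p q] dA dB assms(9) by auto
  also have "Syl 0 (p + q) A B = Sres d f g"
    unfolding f g assms(9)[symmetric] by (rule Sres_Syl0[symmetric, OF assms(1,2) dA dB])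
  finally show ?thesis using assms(3,9) by simp
qed

end
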